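(* Let $0\le k\le n-1$ and let $(\rho,V)$ be an $R[P_n]$-module. Then $(\Phi^-)^kV\simeq V_{U_{n,k},\psi_R}$, the $(U_{n,k},\psi_R)$-coinvariants of $V$. In particular, the $n$-th derivative satisfies $V^{(n)}\simeq V_{N_n,\psi_R}$.
   Context: Let $p$ be a prime, $q$ a power of $p$, $G_n=\mathrm{GL}_n(\mathbb{F}_q)$, $R$ a commutative Noetherian $\mathbb{Z}[\frac1p,\zeta_p]$-algebra, $\psi:(\mathbb{F}_q,+)\to\mathbb{Z}[\frac1p,\zeta_p]^\times$ nontrivial with image $\psi_R$ in $R^\times$. $P_n$ is the mirabolic subgroup (last row $(0,\dots,0,1)$), $U_n=\{\begin{psmallmatrix}I_{n-1}&y\\0&1\end{psmallmatrix}\}$, $N_n$ the upper unipotent subgroup, and $U_{n,k}=\{\begin{psmallmatrix}I_{n-k}&z\\0&y\end{psmallmatrix}:z\in\mathrm{Mat}_{n-k,k}(\mathbb{F}_q),y\in N_k\}$ (so $U_{n,1}=U_n$, $U_{n,n-1}=N_n$). On $U_{n,k}$ (and $N_n$), $\psi_R(u)=\psi_R(\sum_{i=1}^{n-1}u_{i,i+1})$. $V_{H,\psi_R}=V/\langle hv-\psi_R(h)v\rangle$. For an $R[P_n]$-module $V$, $\Phi^-(V)=V/\langle uv-\psi_R(u)v:u\in U_n\rangle$, an $R[P_{n-1}]$-module ($P_{n-1}\subset G_{n-1}$ embedded top-left); $\Psi^-(V)=V/\langle uv-v:u\in U_n\rangle$, an $R[G_{n-1}]$-module; the $k$-th derivative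 is $V^{(k)}=\Psi^-(\Phi^-)^{k-1}(V)$, and $\Psi^-$ on $R[P_1]$-modules is the identity. *)

theory Defs
  imports "HOL-Number_Theory.Number_Theory"
begin

definition ring_ideal :: "'r::comm_ring_1 set \<Rightarrow> bool" where
  "ring_ideal I \<longleftrightarrow> 0 \<in> I \<and> (\<forall>a\<in>I. \<forall>b\<in>I. a + b \<in> I) \<and> (\<forall>r. \<forall>a\<in>I. r * a \<in> I)"

definition noetherian :: "'r::comm_ring_1 itself \<Rightarrow> bool" where
  "noetherian _ \<longleftrightarrow> (\<forall>I::'r set. ring_ideal I \<longrightarrow>
      (\<exists>S. finite S \<and> S \<subseteq> I \<and> I = {\<Sum>s\<in>S. c s * s | c. True}))"

section \<open>Matrices of size n over a field, as functions nat => nat => 'f, zero outside n x n\<close>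

type_synonym 'f mat = "nat \<Rightarrow> nat \<Rightarrow> 'f"

definition canon :: "nat \<Rightarrow> 'f::field mat \<Rightarrow> bool" where
  "canon n A \<longleftrightarrow> (\<forall>i j. (n \<le> i \<or> n \<le> j) \<longrightarrow> A i j = 0)"

definition mone :: "nat \<Rightarrow> 'f::field mat" where
  "mone n = (\<lambda>i j. if i = j \<and> i < n then 1 else 0)"

definition mmult :: "nat \<Rightarrow> 'f::field mat \<Rightarrow> 'f mat \<Rightarrow> 'f mat" where
  "mmult n A B = (\<lambda>i j. if i < n \<and> j < n then (\<Sum>l<n. A i l * B l j) else 0)"

definition GL :: "nat \<Rightarrow> 'f::field mat set" where
  "GL n = {A. canon n A \<and> (\<exists>B. canon n B \<and> mmult n A B = mone n \<and> mmult n B A = mone n)}"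

definition Pmir :: "nat \<Rightarrow> 'f::field mat set" where
  "Pmir n = {A \<in> GL n. \<forall>j<n. A (n - 1) j = (if j = n - 1 then 1 else 0)}"

text \<open>U_{n,k} = {[[I_{n-k}, z],[0, y]] : y in N_k}. U_n = Unk n 1, N_n = Unk n (n-1).\<close>
definition Unk :: "nat \<Rightarrow> nat \<Rightarrow> 'f::field mat set" where
  "Unk n k = {A. canon n A \<and> (\<forall>i<n. \<forall>j<n.
      (j < n - k \<longrightarrow> A i j = (if i = j then 1 else 0)) \<and>
      (n - k \<le> i \<and> n - k \<le> j \<longrightarrow> (j < i \<longrightarrow> A i j = 0) \<and> (i = j \<longrightarrow> A i j = 1)))}"

text \<open>psi_R(u) = psi_R(sum_{i=1}^{n-1} u_{i,i+1}) (0-based indices here).\<close>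
definition psiU :: "('f::field \<Rightarrow> 'r) \<Rightarrow> nat \<Rightarrow> 'f mat \<Rightarrow> 'r" where
  "psiU \<psi> n u = \<psi> (\<Sum>i<n - 1. u i (Suc i))"

definition emb :: "nat \<Rightarrow> nat \<Rightarrow> 'f::field mat \<Rightarrow> 'f mat" where
  "emb m n A = (\<lambda>i j. if i < m \<and> j < m then A i j else if i = j \<and> i < n then 1 else 0)"

definition rmod :: "('r::comm_ring_1 \<Rightarrow> 'v::ab_group_add \<Rightarrow> 'v) \<Rightarrow> bool" where
  "rmod sm \<longleftrightarrow> (\<forall>r x y. sm r (x + y) = sm r x + sm r y) \<and>
     (\<forall>r s x. sm (r + s) x = sm r x + sm s x) \<and>
     (\<forall>r s x. sm (r * s) x = sm r (sm s x)) \<and> (\<forall>x. sm 1 x = x)"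

definition prep :: "nat \<Rightarrow> ('r::comm_ring_1 \<Rightarrow> 'v::ab_group_add \<Rightarrow> 'v) \<Rightarrow> ('f::field mat \<Rightarrow> 'v \<Rightarrow> 'v) \<Rightarrow> bool" where
  "prep n sm \<rho> \<longleftrightarrow> rmod sm \<and>
     (\<forall>g\<in>Pmir n. \<forall>r x y. \<rho> g (sm r x + y) = sm r (\<rho> g x) + \<rho> g y) \<and>
     (\<forall>x. \<rho> (mone n) x = x) \<and>
     (\<forall>g\<in>Pmir n. \<forall>h\<in>Pmir n. \<forall>x. \<rho> (mmult n g h) x = \<rho> g (\<rho> h x))"

definition submod :: "('r::comm_ring_1 \<Rightarrow> 'v::ab_group_add \<Rightarrow> 'v) \<Rightarrow> 'v set \<Rightarrow> bool" where
  "submod sm W \<longleftrightarrow> 0 \<in> W \<and> (\<forall>a\<in>W. \<forall>b\<in>W. a + b \<in> W) \<and> (\<forall>r. \<forall>a\<in>W. sm r a \<in> W)"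

definition rspan :: "('r::comm_ring_1 \<Rightarrow> 'v::ab_group_add \<Rightarrow> 'v) \<Rightarrow> 'v set \<Rightarrow> 'v set" where
  "rspan sm S = \<Inter>{W. submod sm W \<and> S \<subseteq> W}"

section \<open>Quotient modules V/W (elements are cosets)\<close>

definition coset :: "'v::ab_group_add set \<Rightarrow> 'v \<Rightarrow> 'v set" where
  "coset W x = (\<lambda>w. x + w) ` W"

definition quot :: "'v::ab_group_add set \<Rightarrow> 'v set set" where
  "quot W = range (coset W)"

definition qplus :: "'v::ab_group_add set \<Rightarrow> 'v set \<Rightarrow> 'v set" where
  "qplus A B = {a + b | a b. a \<in> A \<and> b \<in> B}"

definition qscale :: "('r \<Rightarrow> 'v::ab_group_add \<Rightarrow> 'v) \<Rightarrow> 'v set \<Rightarrow> 'r \<Rightarrow> 'v set \<Rightarrow> 'v set" where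
  "qscale sm W r A = {sm r a + w | a w. a \<in> A \<and> w \<in> W}"

definition qact :: "('g \<Rightarrow> 'v::ab_group_add \<Rightarrow> 'v) \<Rightarrow> 'v set \<Rightarrow> 'g \<Rightarrow> 'v set \<Rightarrow> 'v set" where
  "qact \<rho> W g A = {\<rho> g a + w | a w. a \<in> A \<and> w \<in> W}"

definition quot_iso :: "('r \<Rightarrow> 'v::ab_group_add \<Rightarrow> 'v) \<Rightarrow> ('g \<Rightarrow> 'v \<Rightarrow> 'v) \<Rightarrow> 'g set \<Rightarrow> 'v set \<Rightarrow> 'v set \<Rightarrow> bool" where
  "quot_iso sm \<rho> G W1 W2 \<longleftrightarrow> (\<exists>f. bij_betw f (quot W1) (quot W2) \<and>
     (\<forall>A\<in>quot W1. \<forall>B\<in>quot W1. f (qplus A B) = qplus (f A) (f B)) \<and>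
     (\<forall>r. \<forall>A\<in>quot W1. f (qscale sm W1 r A) = qscale sm W2 r (f A)) \<and>
     (\<forall>g\<in>G. \<forall>A\<in>quot W1. f (qact \<rho> W1 g A) = qact \<rho> W2 g (f A)))"

text \<open>(Phi^-)^k V = V / phi_sub k, a P_{n-k}-module with action rho o emb (n-k) n.
  Phi^- of V/W (a P_m-module, m = n-k) is V/W modulo the span of u v - psi(u) v, u in U_m;
  its preimage in V is W + span{rho(emb u) x - psi(u) x}.\<close>
fun phi_sub :: "nat \<Rightarrow> ('r::comm_ring_1 \<Rightarrow> 'v::ab_group_add \<Rightarrow> 'v) \<Rightarrow> ('f::field mat \<Rightarrow> 'v \<Rightarrow> 'v)
    \<Rightarrow> ('f \<Rightarrow> 'r) \<Rightarrow> nat \<Rightarrow> 'v set" where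
  "phi_sub n sm \<rho> \<psi> 0 = {0}"
| "phi_sub n sm \<rho> \<psi> (Suc k) = rspan sm (phi_sub n sm \<rho> \<psi> k \<union>
      {\<rho> (emb (n - k) n u) x - sm (psiU \<psi> (n - k) u) x | u x. u \<in> Unk (n - k) 1})"

text \<open>V^{(k)} = Psi^- (Phi^-)^{k-1} V (k >= 1), as a quotient of V.  For k = n, U_1 = {I_1},
  so Psi^- is the identity on P_1-modules, as in the paper's convention.\<close>
definition deriv_sub :: "nat \<Rightarrow> ('r::comm_ring_1 \<Rightarrow> 'v::ab_group_add \<Rightarrow> 'v) \<Rightarrow> ('f::field mat \<Rightarrow> 'v \<Rightarrow> 'v)
    \<Rightarrow> ('f \<Rightarrow> 'r) \<Rightarrow> nat \<Rightarrow> 'v set" where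
  "deriv_sub n sm \<rho> \<psi> k = rspan sm (phi_sub n sm \<rho> \<psi> (k - 1) \<union>
      {\<rho> (emb (n - k + 1) n u) x - x | u x. u \<in> Unk (n - k + 1) 1})"

text \<open>V_{U_{n,k},psi} = V / span{u x - psi(u) x : u in U_{n,k}}.\<close>
definition coinv_sub :: "nat \<Rightarrow> ('r::comm_ring_1 \<Rightarrow> 'v::ab_group_add \<Rightarrow> 'v) \<Rightarrow> ('f::field mat \<Rightarrow> 'v \<Rightarrow> 'v)
    \<Rightarrow> ('f \<Rightarrow> 'r) \<Rightarrow> nat \<Rightarrow> 'v set" where
  "coinv_sub n sm \<rho> \<psi> k = rspan sm {\<rho> u x - sm (psiU \<psi> n u) x | u x. u \<in> Unk n k}"

end

theory Submission
  imports Defs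
begin


lemma rspan_sub: "S \<subseteq> rspan sm S"
  unfolding rspan_def by blast

lemma rspan_least: "submod sm W \<Longrightarrow> S \<subseteq> W \<Longrightarrow> rspan sm S \<subseteq> W"
  unfolding rspan_def by blast

lemma rspan_submod: "submod sm (rspan sm S)"
  unfolding rspan_def submod_def by blast

lemma rspan_mono: "S \<subseteq> T \<Longrightarrow> rspan sm S \<subseteq> rspan sm T"
  unfolding rspan_def by blast

lemma rmod_zero: assumes "rmod sm" shows "sm r 0 = 0"
proof -
  have "sm r (0 + 0) = sm r 0 + sm r 0" using assms unfolding rmod_def by blast
  thus ?thesis by simp
qed

lemma rmod_diff: assumes "rmod sm" shows "sm r (x - y) = sm r x - sm r y"
proof -
  have "sm r ((x - y) + y) = sm r (x - y) + sm r y" using assms unfolding rmod_def by blast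
  thus ?thesis by (simp add: algebra_simps)
qed

lemma rmod_neg1: assumes "rmod sm" shows "sm (-1) x = - x"
proof -
  have "sm (1 + -1) x = sm 1 x + sm (-1) x" using assms unfolding rmod_def by blast
  moreover have "sm 0 x = 0"
  proof -
    have "sm (0 + 0) x = sm 0 x + sm 0 x" using assms unfolding rmod_def by blast
    thus ?thesis by simp
  qed
  ultimately have "x + sm (-1) x = 0" using assms unfolding rmod_def by simp
  thus ?thesis using minus_unique[of x "sm (-1) x"] by simp
qed

lemma submod_diff: assumes "rmod sm" "submod sm W" "a \<in> W" "b \<in> W" shows "a - b \<in> W"
proof -
  have "sm (-1) b \<in> W" using assms unfolding submod_def by blast
  hence "a + sm (-1) b \<in> W" using assms unfolding submod_def by blast
  thus ?thesis using rmod_neg1[OF assms(1)] by simp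
qed

lemma submod_zero: assumes "rmod sm" shows "submod sm {0}"
  using rmod_zero[OF assms] unfolding submod_def by auto

lemma rspan_of_submod: "submod sm W \<Longrightarrow> rspan sm W = W"
  using rspan_sub rspan_least by blast

definition Emat :: "nat \<Rightarrow> nat \<Rightarrow> (nat \<Rightarrow> 'f) \<Rightarrow> 'f::field mat" where
 "Emat n m c = (\<lambda>i j. if i < n \<and> j < n then (if i = j then 1 else if j = m \<and> i < m then c i else 0) else 0)"

lemma mmult_Emat:
  assumes "m < n" "\<forall>i<n. \<forall>l<m. B i l = (if i = l then 1 else 0)"
  shows "mmult n B (Emat n m c) = (\<lambda>i j. if i < n \<and> j < n then (if j = m then B i m + (if i < m then c i else 0) else B i j) else 0)"
proof (rule ext, rule ext)
  fix i j
  show "mmult n B (Emat n m c) i j = (if i < n \<and> j < n then (if j = m then B i m + (if i < m then c i else 0) else B i j) else 0)"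
  proof (cases "i < n \<and> j < n")
    case False thus ?thesis by (auto simp: mmult_def)
  next
    case True
    show ?thesis
    proof (cases "j = m")
      case False
      have "(\<Sum>l<n. B i l * Emat n m c l j) = (\<Sum>l<n. if l = j then B i j else 0)"
        by (rule sum.cong) (use True False in \<open>auto simp: Emat_def\<close>)
      also have "\<dots> = B i j" using True by simp
      finally show ?thesis using True False by (simp add: mmult_def)
    next
      case True2: True
      have "(\<Sum>l<n. B i l * Emat n m c l j) = (\<Sum>l<n. (if l = m then B i m else 0) + (if i < m then (if l = i then c i else 0) else 0))"
        by (rule sum.cong) (use True True2 assms(2) in \<open>auto simp: Emat_def\<close>)
      also have "\<dots> = B i m + (if i < m then c i else 0)" using True assms(1) by (simp add: sum.distrib)
      finally show ?thesis using True True2 by (simp add: mmult_def)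
    qed
  qed
qed

lemma mmult_assoc: "mmult n (mmult n A B) C = mmult n A (mmult n B C)"
proof (rule ext, rule ext)
  fix i j
  show "mmult n (mmult n A B) C i j = mmult n A (mmult n B C) i j"
  proof (cases "i < n \<and> j < n")
    case False thus ?thesis by (auto simp: mmult_def)
  next
    case True
    have "mmult n (mmult n A B) C i j = (\<Sum>l<n. (\<Sum>m<n. A i m * B m l) * C l j)"
      using True by (simp add: mmult_def)
    also have "\<dots> = (\<Sum>l<n. \<Sum>m<n. A i m * B m l * C l j)" by (simp add: sum_distrib_right)
    also have "\<dots> = (\<Sum>m<n. \<Sum>l<n. A i m * B m l * C l j)" by (rule sum.swap)
    also have "\<dots> = (\<Sum>m<n. A i m * (\<Sum>l<n. B m l * C l j))" by (simp add: sum_distrib_left mult.assoc)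
    also have "\<dots> = mmult n A (mmult n B C) i j" using True by (simp add: mmult_def)
    finally show ?thesis .
  qed
qed

lemma ifmult1: "(if P then 1 else 0) * (a::'a::semiring_1) = (if P then a else 0)" by simp
lemma ifmult2: "(a::'a::semiring_1) * (if P then 1 else 0) = (if P then a else 0)" by simp

lemma mmult_one_left: "canon n A \<Longrightarrow> mmult n (mone n) A = A"
  by (rule ext, rule ext) (auto simp: mmult_def mone_def canon_def ifmult1 cong: if_cong)

lemma mmult_one_right: "canon n A \<Longrightarrow> mmult n A (mone n) = A"
  by (rule ext, rule ext) (auto simp: mmult_def mone_def canon_def ifmult2 cong: if_cong)

lemma canon_mmult: "canon n (mmult n A B)" by (simp add: canon_def mmult_def)
lemma canon_mone: "canon n (mone n)" by (simp add: canon_def mone_def)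

lemma GL_mult: assumes "g \<in> GL n" "h \<in> GL n" shows "mmult n g h \<in> GL n"
proof -
  obtain g' where g: "canon n g" "canon n g'" "mmult n g g' = mone n" "mmult n g' g = mone n"
    using assms(1) unfolding GL_def by blast
  obtain h' where h: "canon n h" "canon n h'" "mmult n h h' = mone n" "mmult n h' h = mone n"
    using assms(2) unfolding GL_def by blast
  have "mmult n (mmult n g h) (mmult n h' g') = mone n"
    by (metis g h mmult_assoc mmult_one_left)
  moreover have "mmult n (mmult n h' g') (mmult n g h) = mone n"
    by (metis g h mmult_assoc mmult_one_left)
  ultimately show ?thesis unfolding GL_def using canon_mmult by blast
qed

lemma Pmir_mult: assumes "g \<in> Pmir n" "h \<in> Pmir n" "1 \<le> n" shows "mmult n g h \<in> Pmir n"
proof -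
  have "mmult n g h (n - 1) j = (if j = n - 1 then 1 else 0)" if "j < n" for j
  proof -
    have "mmult n g h (n - 1) j = (\<Sum>l<n. g (n - 1) l * h l j)" using that assms(3) by (simp add: mmult_def)
    also have "\<dots> = (\<Sum>l<n. if l = n - 1 then h (n - 1) j else 0)"
      by (rule sum.cong) (use assms(1) in \<open>auto simp: Pmir_def\<close>)
    also have "\<dots> = h (n - 1) j" using assms(3) by simp
    finally show ?thesis using assms(2) that unfolding Pmir_def by auto
  qed
  thus ?thesis using GL_mult assms unfolding Pmir_def by auto
qed



lemma zeta_p: assumes "(\<Sum>j<p. \<zeta> ^ j) = (0::'r::comm_ring_1)" shows "\<zeta> ^ p = 1"
  using one_diff_power_eq[of \<zeta> p] assms by simp

lemma pow_mod_p: assumes "\<zeta> ^ p = (1::'r::comm_ring_1)" shows "\<zeta> ^ N = \<zeta> ^ (N mod p)"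
proof -
  have "\<zeta> ^ N = \<zeta> ^ (p * (N div p) + N mod p)" by simp
  also have "\<dots> = (\<zeta> ^ p) ^ (N div p) * \<zeta> ^ (N mod p)" by (simp only: power_add power_mult)
  finally show ?thesis using assms by simp
qed

lemma psi_add:
  assumes "\<zeta> ^ p = (1::'r::comm_ring_1)" "\<forall>x y. [\<chi> (x + y) = \<chi> x + \<chi> y] (mod p)" "\<forall>x. \<psi> x = \<zeta> ^ \<chi> x"
  shows "\<psi> (x + y) = \<psi> x * \<psi> y"
proof -
  have "\<chi> (x + y) mod p = (\<chi> x + \<chi> y) mod p" using assms(2) unfolding cong_def by blast
  hence "\<zeta> ^ \<chi> (x + y) = \<zeta> ^ (\<chi> x + \<chi> y)" using pow_mod_p[OF assms(1)] by metis
  thus ?thesis using assms(3) by (simp add: power_add)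
qed

lemma psi_zero:
  fixes \<psi> :: "'f::field \<Rightarrow> 'r::comm_ring_1"
  assumes "\<zeta> ^ p = (1::'r::comm_ring_1)" "\<forall>x y. \<psi> (x + y) = \<psi> x * \<psi> y" "\<forall>x. \<psi> x = \<zeta> ^ \<chi> x" "p > 0"
  shows "\<psi> 0 = 1"
proof -
  define c where "c = \<zeta> ^ ((p - 1) * \<chi> 0)"
  have pc: "\<psi> 0 * c = 1"
  proof -
    obtain q where Suc: "p = Suc q" using assms(4) gr0_implies_Suc by blast
    have "\<psi> 0 * c = \<zeta> ^ (\<chi> 0 + q * \<chi> 0)" unfolding c_def using assms(3) Suc by (metis diff_Suc_1 power_add)
    also have "\<chi> 0 + q * \<chi> 0 = p * \<chi> 0" using Suc by simp
    also have "\<zeta> ^ (p * \<chi> 0) = (\<zeta> ^ p) ^ \<chi> 0" by (rule power_mult)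
    finally show ?thesis using assms(1) by simp
  qed
  have e: "\<psi> 0 * \<psi> 0 = \<psi> 0" using assms(2)[rule_format, of 0 0] by simp
  have "1 = \<psi> 0 * c" using pc by simp
  also have "\<dots> = (\<psi> 0 * \<psi> 0) * c" by (simp only: e)
  also have "\<dots> = \<psi> 0 * (\<psi> 0 * c)" by (rule mult.assoc)
  also have "\<dots> = \<psi> 0" using pc by simp
  finally show ?thesis by simp
qed

lemma Unk_0: assumes "u \<in> Unk n 0" shows "u = mone n"
proof (rule ext, rule ext)
  fix i j show "u i j = mone n i j"
    using assms by (cases "i < n \<and> j < n") (auto simp: Unk_def canon_def mone_def)
qed

lemma mone_GL: "mone n \<in> GL n"
  unfolding GL_def using canon_mone mmult_one_left[OF canon_mone] by blast

lemma mone_Pmir: "mone n \<in> Pmir n"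
  using mone_GL unfolding Pmir_def mone_def by auto

lemma psiU_mone: "psiU \<psi> n (mone n) = \<psi> 0"
  unfolding psiU_def mone_def by simp

lemma Unk_mono: assumes "Suc k \<le> n" shows "Unk n k \<subseteq> Unk n (Suc k)"
proof
  fix A assume A: "A \<in> Unk n k"
  have c: "canon n A" and H: "\<And>i j. i < n \<Longrightarrow> j < n \<Longrightarrow> (j < n - k \<longrightarrow> A i j = (if i = j then 1 else 0)) \<and>
      (n - k \<le> i \<and> n - k \<le> j \<longrightarrow> (j < i \<longrightarrow> A i j = 0) \<and> (i = j \<longrightarrow> A i j = 1))"
    using A unfolding Unk_def by auto
  have "(j < n - Suc k \<longrightarrow> A i j = (if i = j then 1 else 0)) \<and>
      (n - Suc k \<le> i \<and> n - Suc k \<le> j \<longrightarrow> (j < i \<longrightarrow> A i j = 0) \<and> (i = j \<longrightarrow> A i j = 1))"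
    if "i < n" "j < n" for i j
  proof (cases "j = n - Suc k")
    case True
    hence "j < n - k" using assms by arith
    thus ?thesis using H[OF that] by auto
  next
    case False
    show ?thesis
    proof (cases "j < n - Suc k")
      case True thus ?thesis using H[OF that] by auto
    next
      case F2: False
      hence "n - k \<le> j" using False assms by arith
      thus ?thesis using H[OF that] by auto
    qed
  qed
  thus "A \<in> Unk n (Suc k)" using c unfolding Unk_def by blast
qed

lemma emb_Unk: assumes "k < n" "u \<in> Unk (n - k) 1" shows "emb (n - k) n u \<in> Unk n (Suc k)"
proof -
  have c: "canon (n - k) u" and H: "\<And>i j. i < n - k \<Longrightarrow> j < n - k \<Longrightarrow> (j < n - k - 1 \<longrightarrow> u i j = (if i = j then 1 else 0)) \<and>
      (n - k - 1 \<le> i \<and> n - k - 1 \<le> j \<longrightarrow> (j < i \<longrightarrow> u i j = 0) \<and> (i = j \<longrightarrow> u i j = 1))"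
    using assms(2) unfolding Unk_def by auto
  have nk: "n - k - 1 = n - Suc k" by simp
  have "canon n (emb (n - k) n u)" unfolding canon_def emb_def by auto
  moreover have "(j < n - Suc k \<longrightarrow> emb (n - k) n u i j = (if i = j then 1 else 0)) \<and>
      (n - Suc k \<le> i \<and> n - Suc k \<le> j \<longrightarrow> (j < i \<longrightarrow> emb (n - k) n u i j = 0) \<and> (i = j \<longrightarrow> emb (n - k) n u i j = 1))"
    if "i < n" "j < n" for i j
  proof (cases "i < n - k \<and> j < n - k")
    case True
    hence e: "emb (n - k) n u i j = u i j" unfolding emb_def by simp
    show ?thesis unfolding e using H[of i j] True unfolding nk by simp
  next
    case False
    hence e: "emb (n - k) n u i j = (if i = j then 1 else 0)" unfolding emb_def using that by auto
    show ?thesis unfolding e by auto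
  qed
  ultimately show ?thesis unfolding Unk_def by blast
qed

lemma psiU_emb: assumes "k < n" shows "psiU \<psi> n (emb (n - k) n u) = psiU \<psi> (n - k) u"
proof -
  have "(\<Sum>i<n - 1. emb (n - k) n u i (Suc i)) = (\<Sum>i<n - k - 1. emb (n - k) n u i (Suc i))"
    by (rule sum.mono_neutral_right) (auto simp: emb_def)
  also have "\<dots> = (\<Sum>i<n - k - 1. u i (Suc i))"
    by (rule sum.cong) (auto simp: emb_def)
  finally show ?thesis unfolding psiU_def by simp
qed

lemma Emat_inv: assumes "m < n" shows "mmult n (Emat n m c) (Emat n m (\<lambda>i. - c i)) = mone n"
proof -
  have cols: "\<forall>i<n. \<forall>l<m. Emat n m c i l = (if i = l then 1 else 0)"
    using assms by (auto simp: Emat_def)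
  have "mmult n (Emat n m c) (Emat n m (\<lambda>i. - c i)) = (\<lambda>i j. if i < n \<and> j < n then (if j = m then Emat n m c i m + (if i < m then - c i else 0) else Emat n m c i j) else 0)"
    by (rule mmult_Emat[OF assms cols])
  also have "\<dots> = mone n"
  proof (rule ext, rule ext)
    fix i j
    show "(if i < n \<and> j < n then (if j = m then Emat n m c i m + (if i < m then - c i else 0) else Emat n m c i j) else 0) = mone n i j"
      using assms by (simp add: Emat_def mone_def)
  qed
  finally show ?thesis .
qed

lemma Emat_GL: assumes "m < n" shows "Emat n m (c :: nat \<Rightarrow> 'f::field) \<in> GL n"
proof -
  have "mmult n (Emat n m c) (Emat n m (\<lambda>i. - c i)) = mone n" by (rule Emat_inv[OF assms])
  moreover have "mmult n (Emat n m (\<lambda>i. - c i)) (Emat n m c) = mone n"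
    using Emat_inv[OF assms, of "\<lambda>i. - c i"] by simp
  moreover have "canon n (Emat n m d)" for d :: "nat \<Rightarrow> 'f" by (simp add: canon_def Emat_def)
  ultimately show ?thesis unfolding GL_def by blast
qed

lemma Emat_Pmir: assumes "m < n" shows "Emat n m c \<in> Pmir n"
proof -
  have "\<forall>j<n. Emat n m c (n - 1) j = (if j = n - 1 then 1 else 0)"
    using assms by (auto simp: Emat_def)
  thus ?thesis using Emat_GL[OF assms] unfolding Pmir_def by blast
qed



context
  fixes u :: "'f::field mat" and n k :: nat
  assumes u: "u \<in> Unk n (Suc k)" and kn: "Suc k \<le> n - 1"
begin

private definition "mm = n - Suc k"
private definition "bb = (\<lambda>i j. if j = mm then (if i = j \<and> i < n then 1 else 0) else u i j)"
private definition "aa = Emat n mm (\<lambda>i. u i mm)"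
private definition "aa' = (\<lambda>i j. if i < n - k \<and> j < n - k then aa i j else 0)"

private lemma uc: "canon n u" using u unfolding Unk_def by blast
private lemma uH: "i < n \<Longrightarrow> j < n \<Longrightarrow> (j < mm \<longrightarrow> u i j = (if i = j then 1 else 0)) \<and>
      (mm \<le> i \<and> mm \<le> j \<longrightarrow> (j < i \<longrightarrow> u i j = 0) \<and> (i = j \<longrightarrow> u i j = 1))"
  using u unfolding Unk_def mm_def by auto

private lemma mm_lt: "mm < n" "1 \<le> mm" "n - k = Suc mm" using kn unfolding mm_def by auto

lemma bb_Unk: "bb \<in> Unk n k"
proof -
  have "canon n bb" using uc unfolding canon_def bb_def by auto
  moreover have "(j < n - k \<longrightarrow> bb i j = (if i = j then 1 else 0)) \<and>
      (n - k \<le> i \<and> n - k \<le> j \<longrightarrow> (j < i \<longrightarrow> bb i j = 0) \<and> (i = j \<longrightarrow> bb i j = 1))"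
    if "i < n" "j < n" for i j
  proof (cases "j = mm")
    case True thus ?thesis using that mm_lt unfolding bb_def by auto
  next
    case False
    hence "bb i j = u i j" unfolding bb_def by simp
    thus ?thesis using uH[OF that] False mm_lt by auto
  qed
  ultimately show ?thesis unfolding Unk_def by blast
qed

lemma bb_aa: "mmult n bb aa = u"
proof -
  have cols: "\<forall>i<n. \<forall>l<mm. bb i l = (if i = l then 1 else 0)"
  proof (intro allI impI)
    fix i l assume il: "i < n" "l < mm"
    hence "l < n" "l \<noteq> mm" using mm_lt by auto
    thus "bb i l = (if i = l then 1 else 0)" using uH[of i l] il unfolding bb_def by auto
  qed
  have "mmult n bb aa = (\<lambda>i j. if i < n \<and> j < n then (if j = mm then bb i mm + (if i < mm then u i mm else 0) else bb i j) else 0)"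
    unfolding aa_def by (rule mmult_Emat[OF mm_lt(1) cols])
  also have "\<dots> = u"
  proof (rule ext, rule ext)
    fix i j
    show "(if i < n \<and> j < n then (if j = mm then bb i mm + (if i < mm then u i mm else 0) else bb i j) else 0) = u i j"
    proof (cases "i < n \<and> j < n")
      case False thus ?thesis using uc unfolding canon_def by auto
    next
      case True
      show ?thesis
      proof (cases "j = mm")
        case False thus ?thesis using True unfolding bb_def by simp
      next
        case jm: True
        have "i < mm \<or> i = mm \<or> mm < i" by arith
        thus ?thesis using uH[of i j] True jm unfolding bb_def by auto
      qed
    qed
  qed
  finally show ?thesis .
qed

lemma aa_emb: "emb (n - k) n aa' = aa"
proof (rule ext, rule ext)
  fix i j
  show "emb (n - k) n aa' i j = aa i j"
    using mm_lt unfolding emb_def aa'_def aa_def Emat_def by auto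
qed

lemma aa'_Unk: "aa' \<in> Unk (n - k) 1"
proof -
  have "canon (n - k) aa'" unfolding canon_def aa'_def by auto
  moreover have "(j < n - k - 1 \<longrightarrow> aa' i j = (if i = j then 1 else 0)) \<and>
      (n - k - 1 \<le> i \<and> n - k - 1 \<le> j \<longrightarrow> (j < i \<longrightarrow> aa' i j = 0) \<and> (i = j \<longrightarrow> aa' i j = 1))"
    if "i < n - k" "j < n - k" for i j
    using that mm_lt unfolding aa'_def aa_def Emat_def by auto
  ultimately show ?thesis unfolding Unk_def by blast
qed

lemma sum_split: "(\<Sum>i<n - 1. u i (Suc i)) = (\<Sum>i<n - 1. bb i (Suc i)) + (\<Sum>i<n - 1. aa i (Suc i))"
proof -
  have "u i (Suc i) = bb i (Suc i) + aa i (Suc i)" if "i < n - 1" for i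
  proof (cases "Suc i = mm")
    case True thus ?thesis using that unfolding bb_def aa_def Emat_def by auto
  next
    case False thus ?thesis using that unfolding bb_def aa_def Emat_def by auto
  qed
  thus ?thesis by (simp add: sum.distrib)
qed

lemma decomp:
  "\<exists>b a'. b \<in> Unk n k \<and> a' \<in> Unk (n - k) 1 \<and> mmult n b (emb (n - k) n a') = u \<and>
     emb (n - k) n a' \<in> Pmir n \<and>
     (\<Sum>i<n - 1. u i (Suc i)) = (\<Sum>i<n - 1. b i (Suc i)) + (\<Sum>i<n - 1. emb (n - k) n a' i (Suc i))"
proof (intro exI conjI)
  show "bb \<in> Unk n k" by (rule bb_Unk)
  show "aa' \<in> Unk (n - k) 1" by (rule aa'_Unk)
  show "mmult n bb (emb (n - k) n aa') = u" unfolding aa_emb by (rule bb_aa)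
  show "emb (n - k) n aa' \<in> Pmir n" unfolding aa_emb aa_def by (rule Emat_Pmir[OF mm_lt(1)])
  show "(\<Sum>i<n - 1. u i (Suc i)) = (\<Sum>i<n - 1. bb i (Suc i)) + (\<Sum>i<n - 1. emb (n - k) n aa' i (Suc i))"
    unfolding aa_emb by (rule sum_split)
qed

end




lemma phi_submod: "rmod sm \<Longrightarrow> submod sm (phi_sub n sm \<rho> \<psi> k)"
  by (cases k) (simp_all add: submod_zero rspan_submod)

lemma main_ind:
  fixes \<psi> :: "'f::field \<Rightarrow> 'r::comm_ring_1" and sm :: "'r \<Rightarrow> 'v::ab_group_add \<Rightarrow> 'v" and \<rho> :: "'f mat \<Rightarrow> 'v \<Rightarrow> 'v"
  assumes prep: "prep n sm \<rho>" and n1: "1 \<le> n" and padd: "\<forall>x y. \<psi> (x + y) = \<psi> x * \<psi> y" and p0: "\<psi> 0 = 1"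
  shows "k \<le> n - 1 \<Longrightarrow> Unk n k \<subseteq> (Pmir n :: 'f mat set) \<and> (\<forall>u\<in>Unk n k. \<forall>x. \<rho> u x - sm (psiU \<psi> n u) x \<in> phi_sub n sm \<rho> \<psi> k)"
proof (induction k)
  case 0
  have rm: "rmod sm" using prep unfolding prep_def by blast
  have "\<rho> u x - sm (psiU \<psi> n u) x = 0" if "u \<in> Unk n 0" for u x
  proof -
    have "u = mone n" by (rule Unk_0[OF that])
    moreover have "\<rho> (mone n) x = x" using prep unfolding prep_def by blast
    moreover have "sm 1 x = x" using rm unfolding rmod_def by blast
    ultimately show ?thesis using p0 by (simp add: psiU_mone)
  qed
  moreover have "Unk n 0 \<subseteq> (Pmir n :: 'f mat set)"
  proof
    fix u assume "u \<in> Unk n 0" thus "u \<in> Pmir n" using Unk_0 mone_Pmir by metis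
  qed
  ultimately show ?case by simp
next
  case (Suc k)
  have rm: "rmod sm" using prep unfolding prep_def by blast
  have kn: "Suc k \<le> n - 1" using Suc.prems .
  have "k \<le> n - 1" using kn by arith
  from Suc.IH[OF this] have IHc: "Unk n k \<subseteq> (Pmir n :: 'f mat set) \<and> (\<forall>u\<in>Unk n k. \<forall>x. \<rho> u x - sm (psiU \<psi> n u) x \<in> phi_sub n sm \<rho> \<psi> k)" .
  hence IH: "Unk n k \<subseteq> (Pmir n :: 'f mat set)" "\<And>u x. u \<in> Unk n k \<Longrightarrow> \<rho> u x - sm (psiU \<psi> n u) x \<in> phi_sub n sm \<rho> \<psi> k"
    by blast+
  let ?W = "phi_sub n sm \<rho> \<psi> (Suc k)"
  have Wsub: "submod sm ?W" by (rule phi_submod[OF rm])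
  have W1: "phi_sub n sm \<rho> \<psi> k \<subseteq> ?W" unfolding phi_sub.simps by (rule subset_trans[OF _ rspan_sub]) blast
  have W2: "\<rho> (emb (n - k) n a') x - sm (psiU \<psi> (n - k) a') x \<in> ?W" if "a' \<in> Unk (n - k) 1" for a' x
    unfolding phi_sub.simps by (rule subsetD[OF rspan_sub], rule UnI2) (use that in blast)
  have "u \<in> Pmir n \<and> (\<forall>x. \<rho> u x - sm (psiU \<psi> n u) x \<in> ?W)" if u: "u \<in> Unk n (Suc k)" for u
  proof -
    obtain b a' where b: "b \<in> Unk n k" and a': "a' \<in> Unk (n - k) 1"
      and ba: "mmult n b (emb (n - k) n a') = u" and aP: "emb (n - k) n a' \<in> Pmir n"
      and sums: "(\<Sum>i<n - 1. u i (Suc i)) = (\<Sum>i<n - 1. b i (Suc i)) + (\<Sum>i<n - 1. emb (n - k) n a' i (Suc i))"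
      using decomp[OF u kn] by blast
    define a where "a = emb (n - k) n a'"
    have bP: "b \<in> Pmir n" using IH(1) b by blast
    have "mmult n b (emb (n - k) n a') \<in> Pmir n" by (rule Pmir_mult[OF bP aP n1])
    hence uP: "u \<in> Pmir n" by (simp only: ba)
    have psi: "psiU \<psi> n u = psiU \<psi> n b * psiU \<psi> (n - k) a'"
    proof -
      have "psiU \<psi> n u = psiU \<psi> n b * psiU \<psi> n a"
        unfolding psiU_def sums a_def by (rule padd[rule_format])
      also have "psiU \<psi> n a = psiU \<psi> (n - k) a'" unfolding a_def
        by (rule psiU_emb) (use kn in arith)
      finally show ?thesis .
    qed
    have "\<rho> u x - sm (psiU \<psi> n u) x \<in> ?W" for x
    proof -
      have "\<rho> (mmult n b a) x = \<rho> b (\<rho> a x)" using prep bP aP unfolding prep_def a_def by blast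
      hence rho: "\<rho> u x = \<rho> b (\<rho> a x)" unfolding a_def ba .
      have smm: "sm (psiU \<psi> n b * psiU \<psi> (n - k) a') x = sm (psiU \<psi> n b) (sm (psiU \<psi> (n - k) a') x)"
        using rm unfolding rmod_def by blast
      have eq: "\<rho> u x - sm (psiU \<psi> n u) x =
        (\<rho> b (\<rho> a x) - sm (psiU \<psi> n b) (\<rho> a x)) + sm (psiU \<psi> n b) (\<rho> a x - sm (psiU \<psi> (n - k) a') x)"
        unfolding rho psi smm rmod_diff[OF rm] by simp
      have t1: "\<rho> b (\<rho> a x) - sm (psiU \<psi> n b) (\<rho> a x) \<in> ?W" using IH(2)[OF b] W1 by blast
      have "\<rho> a x - sm (psiU \<psi> (n - k) a') x \<in> ?W" using W2[OF a'] unfolding a_def .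
      hence t2: "sm (psiU \<psi> n b) (\<rho> a x - sm (psiU \<psi> (n - k) a') x) \<in> ?W"
        using Wsub unfolding submod_def by blast
      show ?thesis unfolding eq using t1 t2 Wsub unfolding submod_def by blast
    qed
    thus ?thesis using uP by blast
  qed
  thus ?case by blast
qed


lemma phi_le_coinv:
  fixes \<psi> :: "'f::field \<Rightarrow> 'r::comm_ring_1" and sm :: "'r \<Rightarrow> 'v::ab_group_add \<Rightarrow> 'v" and \<rho> :: "'f mat \<Rightarrow> 'v \<Rightarrow> 'v"
  assumes rm: "rmod sm" and n1: "1 \<le> n"
  shows "k \<le> n - 1 \<Longrightarrow> phi_sub n sm \<rho> \<psi> k \<subseteq> coinv_sub n sm \<rho> \<psi> k"
proof (induction k)
  case 0
  have "0 \<in> coinv_sub n sm \<rho> \<psi> 0" using rspan_submod unfolding coinv_sub_def submod_def by blast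
  thus ?case by simp
next
  case (Suc k)
  have kn: "Suc k \<le> n - 1" using Suc.prems .
  have "k \<le> n - 1" using kn by arith
  hence IH: "phi_sub n sm \<rho> \<psi> k \<subseteq> coinv_sub n sm \<rho> \<psi> k" using Suc.IH by simp
  have mono: "coinv_sub n sm \<rho> \<psi> k \<subseteq> coinv_sub n sm \<rho> \<psi> (Suc k)"
  proof -
    have "Suc k \<le> n" using kn by arith
    hence sub: "Unk n k \<subseteq> Unk n (Suc k)" by (rule Unk_mono)
    show ?thesis unfolding coinv_sub_def by (rule rspan_mono) (use sub in blast)
  qed
  have gen: "{\<rho> (emb (n - k) n u) x - sm (psiU \<psi> (n - k) u) x | u x. u \<in> Unk (n - k) 1} \<subseteq> coinv_sub n sm \<rho> \<psi> (Suc k)"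
  proof clarify
    fix u :: "'f mat" and x assume u: "u \<in> Unk (n - k) 1"
    have kn': "k < n" using kn by arith
    have eU: "emb (n - k) n u \<in> Unk n (Suc k)" by (rule emb_Unk[OF kn' u])
    have pe: "psiU \<psi> n (emb (n - k) n u) = psiU \<psi> (n - k) u" by (rule psiU_emb[OF kn'])
    have "\<rho> (emb (n - k) n u) x - sm (psiU \<psi> n (emb (n - k) n u)) x \<in> {\<rho> v y - sm (psiU \<psi> n v) y | v y. v \<in> Unk n (Suc k)}"
      by (rule CollectI, rule exI, rule exI, rule conjI[OF refl eU])
    hence "\<rho> (emb (n - k) n u) x - sm (psiU \<psi> (n - k) u) x \<in> {\<rho> v y - sm (psiU \<psi> n v) y | v y. v \<in> Unk n (Suc k)}"
      by (simp only: pe)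
    thus "\<rho> (emb (n - k) n u) x - sm (psiU \<psi> (n - k) u) x \<in> coinv_sub n sm \<rho> \<psi> (Suc k)"
      unfolding coinv_sub_def by (rule subsetD[OF rspan_sub])
  qed
  show ?case unfolding phi_sub.simps
  proof (rule rspan_least)
    show "submod sm (coinv_sub n sm \<rho> \<psi> (Suc k))" unfolding coinv_sub_def by (rule rspan_submod)
    show "phi_sub n sm \<rho> \<psi> k \<union> {\<rho> (emb (n - k) n u) x - sm (psiU \<psi> (n - k) u) x | u x. u \<in> Unk (n - k) 1} \<subseteq> coinv_sub n sm \<rho> \<psi> (Suc k)"
      using IH mono gen by blast
  qed
qed

lemma quot_iso_refl: "quot_iso sm \<rho> G W W"
  unfolding quot_iso_def by (rule exI[of _ id]) simp


theorem lemma2p4: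
  fixes \<psi> :: "'f::{field,finite} \<Rightarrow> 'r::comm_ring_1"
    and \<zeta> :: 'r and \<chi> :: "'f \<Rightarrow> nat" and p e n k :: nat
    and sm :: "'r \<Rightarrow> 'v::ab_group_add \<Rightarrow> 'v" and \<rho> :: "'f mat \<Rightarrow> 'v \<Rightarrow> 'v"
  assumes "prime p" and "e \<ge> 1" and "card (UNIV :: 'f set) = p ^ e"
    and "noetherian TYPE('r)"
    and "\<exists>u::'r. of_nat p * u = 1"
    and "(\<Sum>j<p. \<zeta> ^ j) = 0"
    and "\<forall>x y. [\<chi> (x + y) = \<chi> x + \<chi> y] (mod p)"
    and "\<exists>x. \<not> p dvd \<chi> x"
    and "\<forall>x. \<psi> x = \<zeta> ^ \<chi> x"
    and "1 \<le> n" and "k \<le> n - 1"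
    and "prep n sm \<rho>"
  shows "quot_iso sm \<rho> (emb (n - k) n ` Pmir (n - k)) (phi_sub n sm \<rho> \<psi> k) (coinv_sub n sm \<rho> \<psi> k)
       \<and> quot_iso sm \<rho> {} (deriv_sub n sm \<rho> \<psi> n) (coinv_sub n sm \<rho> \<psi> (n - 1))"
proof -
  have pz: "p > 0" using assms(1) prime_gt_0_nat by blast
  have z: "\<zeta> ^ p = 1" by (rule zeta_p[OF assms(6)])
  have padd: "\<forall>x y. \<psi> (x + y) = \<psi> x * \<psi> y" using psi_add[OF z assms(7) assms(9)] by blast
  have p0: "\<psi> 0 = 1" by (rule psi_zero[OF z padd assms(9) pz])
  have rm: "rmod sm" using assms(12) unfolding prep_def by blast
  have E: "phi_sub n sm \<rho> \<psi> j = coinv_sub n sm \<rho> \<psi> j" if j: "j \<le> n - 1" for j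
  proof
    show "phi_sub n sm \<rho> \<psi> j \<subseteq> coinv_sub n sm \<rho> \<psi> j" by (rule phi_le_coinv[OF rm assms(10) j])
    have M: "\<forall>u\<in>Unk n j. \<forall>x. \<rho> u x - sm (psiU \<psi> n u) x \<in> phi_sub n sm \<rho> \<psi> j"
      using main_ind[OF assms(12) assms(10) padd p0 j] by blast
    show "coinv_sub n sm \<rho> \<psi> j \<subseteq> phi_sub n sm \<rho> \<psi> j" unfolding coinv_sub_def
    proof (rule rspan_least[OF phi_submod[OF rm]])
      show "{\<rho> u x - sm (psiU \<psi> n u) x | u x. u \<in> Unk n j} \<subseteq> phi_sub n sm \<rho> \<psi> j"
      proof clarify
        fix u :: "'f mat" and x assume "u \<in> Unk n j"
        thus "\<rho> u x - sm (psiU \<psi> n u) x \<in> phi_sub n sm \<rho> \<psi> j" using M by blast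
      qed
    qed
  qed
  have D: "deriv_sub n sm \<rho> \<psi> n = phi_sub n sm \<rho> \<psi> (n - 1)"
  proof -
    have X: "{\<rho> (emb (n - n + 1) n u) x - x | u x. u \<in> Unk (n - n + 1) 1} \<subseteq> {0}"
    proof clarify
      fix u :: "'f mat" and x assume "u \<in> Unk (n - n + 1) 1"
      hence "u \<in> Unk 1 1" by simp
      hence u00: "u 0 0 = 1" unfolding Unk_def by simp
      have "emb 1 n u = mone n"
      proof (rule ext, rule ext)
        fix i j show "emb 1 n u i j = mone n i j"
          using u00 assms(10) by (simp add: emb_def mone_def)
      qed
      hence "emb (n - n + 1) n u = mone n" by simp
      moreover have "\<rho> (mone n) x = x" using assms(12) unfolding prep_def by blast
      ultimately show "\<rho> (emb (n - n + 1) n u) x - x = 0" by simp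
    qed
    have S: "submod sm (phi_sub n sm \<rho> \<psi> (n - 1))" by (rule phi_submod[OF rm])
    hence z0: "0 \<in> phi_sub n sm \<rho> \<psi> (n - 1)" by (simp add: submod_def)
    have "phi_sub n sm \<rho> \<psi> (n - 1) \<union> {\<rho> (emb (n - n + 1) n u) x - x | u x. u \<in> Unk (n - n + 1) 1} \<subseteq> phi_sub n sm \<rho> \<psi> (n - 1)"
      by (rule Un_least[OF subset_refl subset_trans[OF X]]) (use z0 in blast)
    hence "rspan sm (phi_sub n sm \<rho> \<psi> (n - 1) \<union> {\<rho> (emb (n - n + 1) n u) x - x | u x. u \<in> Unk (n - n + 1) 1}) \<subseteq> phi_sub n sm \<rho> \<psi> (n - 1)"
      by (rule rspan_least[OF S])
    moreover have "phi_sub n sm \<rho> \<psi> (n - 1) \<subseteq> rspan sm (phi_sub n sm \<rho> \<psi> (n - 1) \<union> {\<rho> (emb (n - n + 1) n u) x - x | u x. u \<in> Unk (n - n + 1) 1})"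
      by (rule subset_trans[OF Un_upper1 rspan_sub])
    ultimately show ?thesis unfolding deriv_sub_def by (rule equalityI)
  qed
  have E1: "phi_sub n sm \<rho> \<psi> k = coinv_sub n sm \<rho> \<psi> k" by (rule E[OF assms(11)])
  have E2: "deriv_sub n sm \<rho> \<psi> n = coinv_sub n sm \<rho> \<psi> (n - 1)" using D E[of "n - 1"] by simp
  show ?thesis unfolding E1 E2 by (simp add: quot_iso_refl)
qed


end
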